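(* Let $(\mathbf{C}, I^{\Delta})$ be a finite-type based chain complex of real inner product spaces with Hodge basis $I^\Delta$, and let $M^\Delta$ be the Hodge matching on $(\mathbf{C},I^{\Delta})$. Then $M^\Delta$ is a Morse matching and satisfies \begin{enumerate} \item $(M^\Delta)^0_n = \ker \Delta_n$ (i.e. the critical cells in degree $n$ span $\ker\Delta_n$), where $\Delta : \mathbf{C} \to \mathbf{C}$ is the combinatorial Laplacian of $\mathbf{C}$, and \item $\partial^{M^\Delta} = 0$, where $\partial^{M^\Delta}$ is the boundary operator of the Morse chain complex $\mathbf{C}^{M^\Delta}$. \end{enumerate}
   Context: $(\mathbf{C},\partial)$ is a degree-wise finite-dimensional chain complex of real vector spaces with an inner product on each $\mathbf{C}_n$; $\partial_n^\dagger:\mathbf{C}_{n-1}\to\mathbf{C}_n$ denotes the adjoint of $\partial_n$. The combinatorial Laplacian is $\Delta_n = \partial_n^\dagger\partial_n + \partial_{n+1}\partial_{n+1}^\dagger$, with $\Delta_n^+=\partial_{n+1}\partial_{n+1}^\dagger$ and $\Delta_n^-=\partial_n^\dagger\partial_n$; one has the orthogonal Hodge decomposition $\mathbf{C}_n = \operatorname{im}\partial_{n+1}\oplus\ker\Delta_n\oplus\operatorname{im}\partial_n^\dagger$. For a linear map $f:V\to W$ of real finite-dimensional inner product spaces, singular value decomposition gives orthonormal bases $\mathcal{R}(f)$ of $V$ and $\mathcal{L}(f)$ of $W$ consisting of eigenvectors of $f^\dagger f$ and $ff^\dagger$, such that for each nonzero eigenvalue $\lambda$ there are unique $v\in\mathcal{R}(f)$,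 $w\in\mathcal{L}(f)$ with $f(v)=\sqrt{\lambda}\,w$; $\mathcal{R}_+(f),\mathcal{L}_+(f)$ denote the elements with nonzero eigenvalue. A Hodge basis is $I^\Delta=\{I^\Delta_n\}$ with $I_n^{\Delta}= \mathcal{L}_+(\partial_{n+1}) \cup \mathcal{R}_+(\partial_n) \cup \mathcal{B}(\ker\Delta_n)$ for some basis $\mathcal{B}(\ker\Delta_n)$ of $\ker\Delta_n$ (each basis vector spanning a one-dimensional summand). The Hodge matching is $M^\Delta := \bigcup_i \{ v \in \mathcal{R}_+(\partial_i) \to w \in \mathcal{L}_+(\partial_i) \mid \partial_i v = \sigma w, \sigma \neq 0 \}$. For a based complex $(\mathbf{C},I)$ with $\mathbf{C}_n=\bigoplus_{\alpha\in I_n}C_\alpha$ and components $\partial_{\beta,\alpha}:C_\alpha\to C_\beta$, the graph $\mathcal{G}(\mathbf{C})$ has vertices $I$ and edges $\alpha\to\beta$ whenever $\partial_{\beta,\alpha}\neq0$; a Morse matching $M$ is a set of edges such that each vertex is in at most one edge of $M$, each $\partial_{\beta,\alpha}$ for $\alpha\to\beta$ in $M$ is an isomorphism, and the relation "there is a directed path from $\alpha$ to $\beta$ in $\mathcal{G}(\mathbf{C})$ with the edges of $M$ reversed" is a partial order on each $I_n$. $M^0$ denotes the unmatched (critical) cells; the Morse complex $\mathbf{C}^M_n=\bigoplus_{\alpha\in I_n\cap M^0}C_\alpha$ has boundary $\partial^{M}(x)=\sum_{\beta\in M^0\cap I_{n-1}}\Gamma_{\beta,\alpha}(x)$, where $\Gamma_{\beta,\alpha}$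 is the sum over directed paths from $\alpha$ to $\beta$ in the reversed graph of the composites of components, with matched edges contributing $-\partial_{\beta,\alpha}^{-1}$. *)

theory Defs
  imports "HOL-Analysis.Analysis"
begin

text \<open>All chain groups live inside one ambient real inner product space of type 'v;
  the degree-n chain group is a finite-dimensional subspace C n (degrees are integers),
  with the restricted inner product.\<close>

definition fin_dim_subspace :: "'v::real_vector set \<Rightarrow> bool" where
  "fin_dim_subspace S \<longleftrightarrow> subspace S \<and> (\<exists>B. finite B \<and> span B = S)"

definition linear_on_sub :: "'v::real_vector set \<Rightarrow> ('v \<Rightarrow> 'w::real_vector) \<Rightarrow> bool" where
  "linear_on_sub S f \<longleftrightarrow> (\<forall>x\<in>S. \<forall>y\<in>S. f (x + y) = f x + f y) \<and> (\<forall>c. \<forall>x\<in>S. f (c *\<^sub>R x) = c *\<^sub>R f x)"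

definition chain_complex :: "(int \<Rightarrow> 'v::real_inner set) \<Rightarrow> (int \<Rightarrow> 'v \<Rightarrow> 'v) \<Rightarrow> bool" where
  "chain_complex C bd \<longleftrightarrow>
     (\<forall>n. fin_dim_subspace (C n)) \<and>
     (\<forall>n. linear_on_sub (C n) (bd n)) \<and>
     (\<forall>n. bd n ` C n \<subseteq> C (n - 1)) \<and>
     (\<forall>n. \<forall>x\<in>C n. bd (n - 1) (bd n x) = 0)"

definition adj :: "'v::real_inner set \<Rightarrow> ('v \<Rightarrow> 'v) \<Rightarrow> 'v \<Rightarrow> 'v" where
  "adj V f y = (THE x. x \<in> V \<and> (\<forall>u\<in>V. inner (f u) y = inner u x))"

definition laplacian :: "(int \<Rightarrow> 'v::real_inner set) \<Rightarrow> (int \<Rightarrow> 'v \<Rightarrow> 'v) \<Rightarrow> int \<Rightarrow> 'v \<Rightarrow> 'v" where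
  "laplacian C bd n x = adj (C n) (bd n) (bd n x) + bd (n + 1) (adj (C (n + 1)) (bd (n + 1)) x)"

definition lap_kernel :: "(int \<Rightarrow> 'v::real_inner set) \<Rightarrow> (int \<Rightarrow> 'v \<Rightarrow> 'v) \<Rightarrow> int \<Rightarrow> 'v set" where
  "lap_kernel C bd n = {x \<in> C n. laplacian C bd n x = 0}"

definition is_basis_of :: "'v::real_vector set \<Rightarrow> 'v set \<Rightarrow> bool" where
  "is_basis_of B S \<longleftrightarrow> B \<subseteq> S \<and> independent B \<and> span B = S"

definition orthonormal_basis_of :: "'v::real_inner set \<Rightarrow> 'v set \<Rightarrow> bool" where
  "orthonormal_basis_of B S \<longleftrightarrow> B \<subseteq> S \<and> span B = S \<and>
     (\<forall>x\<in>B. norm x = 1) \<and> (\<forall>x\<in>B. \<forall>y\<in>B. x \<noteq> y \<longrightarrow> inner x y = 0)"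

text \<open>R_+(f): elements of R with nonzero eigenvalue for f^dag f; L_+(f) similarly for f f^dag.\<close>
definition Rplus :: "'v::real_inner set \<Rightarrow> ('v \<Rightarrow> 'v) \<Rightarrow> 'v set \<Rightarrow> 'v set" where
  "Rplus V f R = {v \<in> R. adj V f (f v) \<noteq> 0}"

definition Lplus :: "'v::real_inner set \<Rightarrow> ('v \<Rightarrow> 'v) \<Rightarrow> 'v set \<Rightarrow> 'v set" where
  "Lplus V f L = {w \<in> L. f (adj V f w) \<noteq> 0}"

definition svd_bases :: "'v::real_inner set \<Rightarrow> 'v set \<Rightarrow> ('v \<Rightarrow> 'v) \<Rightarrow> 'v set \<Rightarrow> 'v set \<Rightarrow> bool" where
  "svd_bases V W f R L \<longleftrightarrow>
     orthonormal_basis_of R V \<and> orthonormal_basis_of L W \<and>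
     (\<forall>v\<in>R. \<exists>lam. adj V f (f v) = lam *\<^sub>R v) \<and>
     (\<forall>w\<in>L. \<exists>lam. f (adj V f w) = lam *\<^sub>R w) \<and>
     (\<exists>p. bij_betw p (Rplus V f R) (Lplus V f L) \<and>
        (\<forall>v\<in>Rplus V f R. \<exists>lam. lam \<noteq> 0 \<and> adj V f (f v) = lam *\<^sub>R v \<and> f v = sqrt lam *\<^sub>R p v))"

text \<open>R n, L n are the SVD bases of bd n : C n -> C (n-1); K n is the chosen basis of ker Delta_n.\<close>
definition hodge_basis :: "(int \<Rightarrow> 'v::real_inner set) \<Rightarrow> (int \<Rightarrow> 'v \<Rightarrow> 'v) \<Rightarrow>
    (int \<Rightarrow> 'v set) \<Rightarrow> (int \<Rightarrow> 'v set) \<Rightarrow> (int \<Rightarrow> 'v set) \<Rightarrow> int \<Rightarrow> 'v set" where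
  "hodge_basis C bd R L K n =
     Lplus (C (n + 1)) (bd (n + 1)) (L (n + 1)) \<union> Rplus (C n) (bd n) (R n) \<union> K n"

text \<open>Cells of the based complex are pairs (degree, basis vector); edges go from degree n to n-1.\<close>
type_synonym 'v cell = "int \<times> 'v"

definition hodge_matching :: "(int \<Rightarrow> 'v::real_inner set) \<Rightarrow> (int \<Rightarrow> 'v \<Rightarrow> 'v) \<Rightarrow>
    (int \<Rightarrow> 'v set) \<Rightarrow> (int \<Rightarrow> 'v set) \<Rightarrow> ('v cell \<times> 'v cell) set" where
  "hodge_matching C bd R L =
     {((i, v), (i - 1, w)) | i v w. v \<in> Rplus (C i) (bd i) (R i) \<and> w \<in> Lplus (C i) (bd i) (L i) \<and>
        (\<exists>\<sigma>. \<sigma> \<noteq> 0 \<and> bd i v = \<sigma> *\<^sub>R w)}"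

text \<open>For a based complex with one-dimensional summands span{a}, a in I n, the component
  bd_{b,a} : span{a} -> span{b} is t a |-> t * coef n a b * b.\<close>
definition coef :: "(int \<Rightarrow> 'v::real_vector \<Rightarrow> 'v) \<Rightarrow> (int \<Rightarrow> 'v set) \<Rightarrow> int \<Rightarrow> 'v \<Rightarrow> 'v \<Rightarrow> real" where
  "coef bd I n a b = representation (I (n - 1)) (bd n a) b"

definition cgraph :: "(int \<Rightarrow> 'v::real_vector \<Rightarrow> 'v) \<Rightarrow> (int \<Rightarrow> 'v set) \<Rightarrow> ('v cell \<times> 'v cell) set" where
  "cgraph bd I = {((n, a), (n - 1, b)) | n a b. a \<in> I n \<and> b \<in> I (n - 1) \<and> coef bd I n a b \<noteq> 0}"

definition reversed_graph :: "(int \<Rightarrow> 'v::real_vector \<Rightarrow> 'v) \<Rightarrow> (int \<Rightarrow> 'v set) \<Rightarrow>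
    ('v cell \<times> 'v cell) set \<Rightarrow> ('v cell \<times> 'v cell) set" where
  "reversed_graph bd I M = (cgraph bd I - M) \<union> M\<inverse>"

definition morse_matching :: "(int \<Rightarrow> 'v::real_vector \<Rightarrow> 'v) \<Rightarrow> (int \<Rightarrow> 'v set) \<Rightarrow>
    ('v cell \<times> 'v cell) set \<Rightarrow> bool" where
  "morse_matching bd I M \<longleftrightarrow>
     M \<subseteq> cgraph bd I \<and>
     (\<forall>e1\<in>M. \<forall>e2\<in>M. e1 \<noteq> e2 \<longrightarrow> {fst e1, snd e1} \<inter> {fst e2, snd e2} = {}) \<and>
     (\<forall>n a b. ((n, a), (n - 1, b)) \<in> M \<longrightarrow> coef bd I n a b \<noteq> 0) \<and>
     (\<forall>n a b. a \<in> I n \<longrightarrow> b \<in> I n \<longrightarrow>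
        ((n, a), (n, b)) \<in> (reversed_graph bd I M)\<^sup>* \<longrightarrow>
        ((n, b), (n, a)) \<in> (reversed_graph bd I M)\<^sup>* \<longrightarrow> a = b)"

definition critical :: "(int \<Rightarrow> 'v set) \<Rightarrow> ('v cell \<times> 'v cell) set \<Rightarrow> int \<Rightarrow> 'v set" where
  "critical I M n = {a \<in> I n. \<forall>e\<in>M. fst e \<noteq> (n, a) \<and> snd e \<noteq> (n, a)}"

definition edge_weight :: "(int \<Rightarrow> 'v::real_vector \<Rightarrow> 'v) \<Rightarrow> (int \<Rightarrow> 'v set) \<Rightarrow>
    ('v cell \<times> 'v cell) set \<Rightarrow> 'v cell \<times> 'v cell \<Rightarrow> real" where
  "edge_weight bd I M e =
     (case e of ((n, a), (m, b)) \<Rightarrow>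
        if e \<in> cgraph bd I - M then coef bd I n a b
        else if (snd e, fst e) \<in> M then - inverse (coef bd I m b a)
        else 0)"

definition is_path :: "('c \<times> 'c) set \<Rightarrow> 'c list \<Rightarrow> 'c \<Rightarrow> 'c \<Rightarrow> bool" where
  "is_path E p u v \<longleftrightarrow> p \<noteq> [] \<and> hd p = u \<and> last p = v \<and>
     (\<forall>i. Suc i < length p \<longrightarrow> (p ! i, p ! Suc i) \<in> E)"

text \<open>Gamma_{b,a} (as a scalar, since summands are one-dimensional): sum over directed paths
  from (n,a) to (n-1,b) in the reversed graph of the product of edge weights.\<close>
definition Gamma :: "(int \<Rightarrow> 'v::real_vector \<Rightarrow> 'v) \<Rightarrow> (int \<Rightarrow> 'v set) \<Rightarrow>
    ('v cell \<times> 'v cell) set \<Rightarrow> int \<Rightarrow> 'v \<Rightarrow> 'v \<Rightarrow> real" where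
  "Gamma bd I M n a b =
     (\<Sum>p\<in>{p. is_path (reversed_graph bd I M) p (n, a) (n - 1, b)}.
        prod_list (map (edge_weight bd I M) (zip p (tl p))))"

definition morse_boundary :: "(int \<Rightarrow> 'v::real_vector \<Rightarrow> 'v) \<Rightarrow> (int \<Rightarrow> 'v set) \<Rightarrow>
    ('v cell \<times> 'v cell) set \<Rightarrow> int \<Rightarrow> 'v \<Rightarrow> 'v" where
  "morse_boundary bd I M n x =
     (\<Sum>a\<in>critical I M n. \<Sum>b\<in>critical I M (n - 1).
        (representation (I n) x a * Gamma bd I M n a b) *\<^sub>R b)"

end

theory Submission imports Defs begin

lemma indep_union:
  fixes K :: "'v::real_inner set"
  assumes "finite A" "\<forall>a\<in>A. a \<noteq> 0" "\<forall>a\<in>A. \<forall>b\<in>A. a \<noteq> b \<longrightarrow> inner a b = 0"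
    "\<forall>a\<in>A. \<forall>k\<in>K. inner a k = 0" "independent K"
  shows "independent (A \<union> K)"
  using assms
proof (induction A rule: finite_induct)
  case empty
  then show ?case by simp
next
  case (insert a A)
  have IH: "independent (A \<union> K)" using insert by auto
  have a0: "a \<noteq> 0" using insert by auto
  have aK: "a \<notin> K" using insert(6) a0 by auto
  have nsp: "a \<notin> span (A \<union> K)"
  proof
    assume "a \<in> span (A \<union> K)"
    moreover have "\<And>y. y \<in> A \<union> K \<Longrightarrow> orthogonal a y"
      using insert(2,5,6) unfolding orthogonal_def by auto
    ultimately have "orthogonal a a" by (rule orthogonal_to_span)
    then show False using a0 by (simp add: orthogonal_def)
  qed
  have "insert a A \<union> K = insert a (A \<union> K)" by auto
  then show ?case using IH nsp aK insert(2) by (simp add: independent_insert)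
qed

lemma lin_zero: "linear_on_sub V f \<Longrightarrow> 0 \<in> V \<Longrightarrow> f 0 = 0"
  unfolding linear_on_sub_def by (metis scale_zero_left)

lemma lin_sum:
  assumes "linear_on_sub V f" "subspace V" "finite S" "\<forall>x\<in>S. g x \<in> V"
  shows "f (\<Sum>x\<in>S. g x) = (\<Sum>x\<in>S. f (g x))"
  using assms(3,4)
proof (induction S rule: finite_induct)
  case empty
  then show ?case using lin_zero[OF assms(1)] assms(2) subspace_0 by auto
next
  case (insert x F)
  have "(\<Sum>x\<in>F. g x) \<in> V" using insert assms(2) by (auto intro: subspace_sum)
  then show ?case using insert assms(1) unfolding linear_on_sub_def by auto
qed

lemma onb_finite:
  assumes "fin_dim_subspace V" "orthonormal_basis_of B V"
  shows "finite B" "independent B"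
proof -
  show ind: "independent B"
    using assms(2) unfolding orthonormal_basis_of_def
    by (intro pairwise_orthogonal_independent) (auto simp: pairwise_def orthogonal_def)
  obtain T where "finite T" "span T = V" using assms(1) unfolding fin_dim_subspace_def by auto
  then show "finite B" using independent_span_bound[OF _ ind] assms(2)
    unfolding orthonormal_basis_of_def by auto
qed

lemma onb_expand:
  assumes "fin_dim_subspace V" "orthonormal_basis_of B V" "u \<in> V"
  shows "u = (\<Sum>e\<in>B. inner u e *\<^sub>R e)"
proof -
  have fin: "finite B" and ind: "independent B" using onb_finite[OF assms(1,2)] by auto
  have sp: "u \<in> span B" using assms(2,3) unfolding orthonormal_basis_of_def by auto
  have eq: "u = (\<Sum>e\<in>B. representation B u e *\<^sub>R e)"
    using sum_representation_eq[OF ind sp fin] by simp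
  have "inner u e' = representation B u e'" if "e' \<in> B" for e'
  proof -
    have "inner u e' = (\<Sum>e\<in>B. representation B u e * inner e e')"
      by (subst eq) (simp add: inner_sum_left)
    also have "\<dots> = (\<Sum>e\<in>B. if e = e' then representation B u e else 0)"
      using assms(2) that unfolding orthonormal_basis_of_def
      by (intro sum.cong) (auto simp: dot_square_norm)
    also have "\<dots> = representation B u e'" using fin that by simp
    finally show ?thesis .
  qed
  then show ?thesis using eq by (metis (no_types, lifting) sum.cong)
qed

lemma adj_char:
  assumes "fin_dim_subspace V" "orthonormal_basis_of B V" "linear_on_sub V f"
  shows "adj V f y \<in> V \<and> (\<forall>u\<in>V. inner (f u) y = inner u (adj V f y))"
proof -
  have fin: "finite B" using onb_finite[OF assms(1,2)] by auto
  have sub: "subspace V" using assms(1) unfolding fin_dim_subspace_def by auto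
  have BV: "B \<subseteq> V" using assms(2) unfolding orthonormal_basis_of_def by auto
  define x where "x = (\<Sum>e\<in>B. inner (f e) y *\<^sub>R e)"
  have xV: "x \<in> V" unfolding x_def using BV sub
    by (intro subspace_sum) (auto intro: subspace_scale)
  have xc: "\<forall>u\<in>V. inner (f u) y = inner u x"
  proof
    fix u assume uV: "u \<in> V"
    have "f u = f (\<Sum>e\<in>B. inner u e *\<^sub>R e)" using onb_expand[OF assms(1,2) uV] by simp
    also have "\<dots> = (\<Sum>e\<in>B. f (inner u e *\<^sub>R e))"
      by (intro lin_sum[OF assms(3) sub fin]) (use BV sub in \<open>auto simp: subspace_scale\<close>)
    also have "\<dots> = (\<Sum>e\<in>B. inner u e *\<^sub>R f e)"
      using assms(3) BV unfolding linear_on_sub_def by (intro sum.cong) auto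
    finally have "inner (f u) y = (\<Sum>e\<in>B. inner u e * inner (f e) y)"
      by (simp add: inner_sum_left)
    also have "\<dots> = inner u x" unfolding x_def by (simp add: inner_sum_right mult.commute)
    finally show "inner (f u) y = inner u x" .
  qed
  have uniq: "z = x" if "z \<in> V" "\<forall>u\<in>V. inner (f u) y = inner u z" for z
  proof -
    have "z - x \<in> V" using that xV sub by (simp add: subspace_diff)
    then have "inner (z - x) z = inner (z - x) x" using that xc by metis
    then have "inner (z - x) (z - x) = 0" by (simp add: inner_diff_right)
    then show ?thesis by simp
  qed
  have "adj V f y = x" unfolding adj_def
    using xV xc uniq by (intro the_equality) auto
  then show ?thesis using xV xc by simp
qed

locale hs =
  fixes C :: "int \<Rightarrow> 'v::real_inner set"
    and bd :: "int \<Rightarrow> 'v \<Rightarrow> 'v"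
    and R L K :: "int \<Rightarrow> 'v set"
  assumes cc: "chain_complex C bd"
    and svd: "\<forall>n. svd_bases (C n) (C (n - 1)) (bd n) (R n) (L n)"
    and kb: "\<forall>n. is_basis_of (K n) (lap_kernel C bd n)"
begin

abbreviation "Rp n \<equiv> Rplus (C n) (bd n) (R n)"
abbreviation "Lp n \<equiv> Lplus (C n) (bd n) (L n)"
abbreviation "I \<equiv> hodge_basis C bd R L K"
abbreviation "M \<equiv> hodge_matching C bd R L"

lemma fd: "fin_dim_subspace (C n)" using cc unfolding chain_complex_def by auto
lemma sub: "subspace (C n)" using fd unfolding fin_dim_subspace_def by auto
lemma lin: "linear_on_sub (C n) (bd n)" using cc unfolding chain_complex_def by auto
lemma bdC: "x \<in> C n \<Longrightarrow> bd n x \<in> C (n - 1)" using cc unfolding chain_complex_def by blast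
lemma bdbd: "x \<in> C n \<Longrightarrow> bd (n - 1) (bd n x) = 0" using cc unfolding chain_complex_def by auto
lemma onbR: "orthonormal_basis_of (R n) (C n)" using svd unfolding svd_bases_def by auto
lemma onbL: "orthonormal_basis_of (L n) (C (n - 1))" using svd unfolding svd_bases_def by auto
lemma finR: "finite (R n)" using onb_finite[OF fd onbR] by auto
lemma finL: "finite (L n)" using onb_finite[OF fd onbL] by auto

lemma adjC: "adj (C n) (bd n) y \<in> C n" using adj_char[OF fd onbR lin] by auto
lemma adjI: "u \<in> C n \<Longrightarrow> inner (bd n u) y = inner u (adj (C n) (bd n) y)"
  using adj_char[OF fd onbR lin] by auto

lemma lin_scale: "x \<in> C n \<Longrightarrow> bd n (c *\<^sub>R x) = c *\<^sub>R bd n x"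
  using lin unfolding linear_on_sub_def by auto

lemma Rp_facts:
  assumes "v \<in> Rp n"
  shows "v \<in> C n" "norm v = 1" "\<exists>lam. lam \<noteq> 0 \<and> adj (C n) (bd n) (bd n v) = lam *\<^sub>R v"
proof -
  show "v \<in> C n" "norm v = 1" using assms onbR[of n] unfolding Rplus_def orthonormal_basis_of_def by auto
  obtain lam where "adj (C n) (bd n) (bd n v) = lam *\<^sub>R v" using assms svd unfolding svd_bases_def Rplus_def by blast
  moreover have "adj (C n) (bd n) (bd n v) \<noteq> 0" using assms unfolding Rplus_def by auto
  ultimately show "\<exists>lam. lam \<noteq> 0 \<and> adj (C n) (bd n) (bd n v) = lam *\<^sub>R v" by auto
qed

lemma Rp_bd: assumes "v \<in> Rp n" shows "\<exists>s w. s \<noteq> 0 \<and> w \<in> Lp n \<and> bd n v = s *\<^sub>R w"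
proof -
  obtain p where "bij_betw p (Rp n) (Lp n)"
    and "\<forall>v\<in>Rp n. \<exists>lam. lam \<noteq> 0 \<and> adj (C n) (bd n) (bd n v) = lam *\<^sub>R v \<and> bd n v = sqrt lam *\<^sub>R p v"
    using svd unfolding svd_bases_def by blast
  then show ?thesis using assms unfolding bij_betw_def
    by (metis image_eqI real_sqrt_eq_zero_cancel_iff)
qed

lemma Lp_facts:
  assumes "w \<in> Lp m"
  shows "w \<in> C (m - 1)" "norm w = 1" "\<exists>u\<in>C m. w = bd m u"
proof -
  show "w \<in> C (m - 1)" "norm w = 1" using assms onbL[of m] unfolding Lplus_def orthonormal_basis_of_def by auto
  obtain lam where e: "bd m (adj (C m) (bd m) w) = lam *\<^sub>R w" using assms svd unfolding svd_bases_def Lplus_def by blast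
  moreover have "bd m (adj (C m) (bd m) w) \<noteq> 0" using assms unfolding Lplus_def by auto
  ultimately have l0: "lam \<noteq> 0" by auto
  have "(1/lam) *\<^sub>R adj (C m) (bd m) w \<in> C m" using adjC sub subspace_scale by blast
  moreover have "bd m ((1/lam) *\<^sub>R adj (C m) (bd m) w) = w" using lin_scale[OF adjC] e l0 by simp
  ultimately show "\<exists>u\<in>C m. w = bd m u" by metis
qed

lemma Lp_bd0: assumes "w \<in> Lp (n + 1)" shows "bd n w = 0"
proof -
  obtain u where "u \<in> C (n+1)" "w = bd (n+1) u" using Lp_facts(3)[OF assms] by auto
  then show ?thesis using bdbd[of u "n+1"] by simp
qed

lemma orth_LR: assumes "w \<in> Lp (n + 1)" "v \<in> Rp n" shows "inner w v = 0"
proof -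
  obtain u where u: "u \<in> C (n+1)" "w = bd (n+1) u" using Lp_facts(3)[OF assms(1)] by auto
  obtain lam where l: "lam \<noteq> 0" "adj (C n) (bd n) (bd n v) = lam *\<^sub>R v" using Rp_facts(3)[OF assms(2)] by auto
  have wC: "w \<in> C n" using bdC[OF u(1)] u(2) by simp
  have "inner w (adj (C n) (bd n) (bd n v)) = inner (bd n w) (bd n v)" using adjI[OF wC] by simp
  also have "\<dots> = 0" using Lp_bd0[OF assms(1)] by simp
  finally show ?thesis using l by simp
qed

lemma ker_facts: assumes "k \<in> lap_kernel C bd n"
  shows "bd n k = 0" "adj (C (n+1)) (bd (n+1)) k = 0"
proof -
  have kC: "k \<in> C n" and lk: "laplacian C bd n k = 0" using assms unfolding lap_kernel_def by auto
  have a1: "inner k (adj (C n) (bd n) (bd n k)) = inner (bd n k) (bd n k)" using adjI[OF kC] by simp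
  have a2: "inner k (bd (n+1) (adj (C (n+1)) (bd (n+1)) k)) = inner (adj (C (n+1)) (bd (n+1)) k) (adj (C (n+1)) (bd (n+1)) k)"
    using adjI[OF adjC, of "n+1" k k] by (simp add: inner_commute)
  have "0 = inner k (laplacian C bd n k)" using lk by simp
  also have "\<dots> = inner (bd n k) (bd n k) + inner (adj (C (n+1)) (bd (n+1)) k) (adj (C (n+1)) (bd (n+1)) k)"
    unfolding laplacian_def using a1 a2 by (simp add: inner_add_right)
  finally have "inner (bd n k) (bd n k) + inner (adj (C (n+1)) (bd (n+1)) k) (adj (C (n+1)) (bd (n+1)) k) = 0" by simp
  then show "bd n k = 0" "adj (C (n+1)) (bd (n+1)) k = 0"
    by (smt (verit) inner_eq_zero_iff inner_ge_zero)+
qed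

lemma orth_KL: assumes "k \<in> lap_kernel C bd n" "w \<in> Lp (n + 1)" shows "inner w k = 0"
proof -
  obtain u where u: "u \<in> C (n+1)" "w = bd (n+1) u" using Lp_facts(3)[OF assms(2)] by auto
  then show ?thesis using adjI[OF u(1), of k] ker_facts(2)[OF assms(1)] by simp
qed

lemma orth_KR: assumes "k \<in> lap_kernel C bd n" "v \<in> Rp n" shows "inner v k = 0"
proof -
  have kC: "k \<in> C n" using assms unfolding lap_kernel_def by auto
  obtain lam where l: "lam \<noteq> 0" "adj (C n) (bd n) (bd n v) = lam *\<^sub>R v" using Rp_facts(3)[OF assms(2)] by auto
  have "inner k (adj (C n) (bd n) (bd n v)) = 0" using adjI[OF kC, of "bd n v"] ker_facts(1)[OF assms(1)] by simp
  then show ?thesis using l by (simp add: inner_commute)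
qed

lemma K_sub: "K n \<subseteq> lap_kernel C bd n" and K_ind: "independent (K n)"
  and K_span: "span (K n) = lap_kernel C bd n"
  using kb unfolding is_basis_of_def by auto

lemma indepI: "independent (I n)"
proof -
  have "independent ((Lp (n+1) \<union> Rp n) \<union> K n)"
  proof (rule indep_union)
    show "finite (Lp (n+1) \<union> Rp n)" using finL finR unfolding Lplus_def Rplus_def by auto
    show "\<forall>a\<in>Lp (n+1) \<union> Rp n. a \<noteq> 0" using Lp_facts(2) Rp_facts(2) by fastforce
    show "\<forall>a\<in>Lp (n+1) \<union> Rp n. \<forall>b\<in>Lp (n+1) \<union> Rp n. a \<noteq> b \<longrightarrow> inner a b = 0"
    proof -
      have cr: "\<forall>a\<in>Lp(n+1). \<forall>b\<in>Rp n. inner a b = 0 \<and> inner b a = 0"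
        using orth_LR by (simp add: inner_commute)
      show ?thesis using onbL[of "n+1"] onbR[of n] cr
      unfolding orthonormal_basis_of_def Lplus_def Rplus_def
      by blast
    qed
    show "\<forall>a\<in>Lp (n+1) \<union> Rp n. \<forall>k\<in>K n. inner a k = 0"
      using K_sub orth_KL orth_KR by blast
    show "independent (K n)" by (rule K_ind)
  qed
  then show ?thesis unfolding hodge_basis_def by simp
qed


lemma rep_sb: "independent B \<Longrightarrow> w \<in> B \<Longrightarrow> representation B (s *\<^sub>R w) b = (if b = w then s else 0)"
  by (simp add: representation_scale span_base representation_basis)

lemma Lp_in_I: "w \<in> Lp n \<Longrightarrow> w \<in> I (n - 1)" unfolding hodge_basis_def by simp
lemma Rp_in_I: "v \<in> Rp n \<Longrightarrow> v \<in> I n" unfolding hodge_basis_def by simp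

lemma M_mem: "((i,v),(j,w)) \<in> M \<longleftrightarrow> j = i - 1 \<and> v \<in> Rp i \<and> w \<in> Lp i \<and> (\<exists>\<sigma>. \<sigma> \<noteq> 0 \<and> bd i v = \<sigma> *\<^sub>R w)"
  unfolding hodge_matching_def by auto

lemma M_form: "e \<in> M \<Longrightarrow> \<exists>i v w. e = ((i,v),(i-1,w)) \<and> v \<in> Rp i \<and> w \<in> Lp i \<and> (\<exists>\<sigma>. \<sigma> \<noteq> 0 \<and> bd i v = \<sigma> *\<^sub>R w)"
  unfolding hodge_matching_def by auto

lemma coef_M: assumes "((i,v),(j,w)) \<in> M" shows "coef bd I i v w \<noteq> 0"
proof -
  obtain \<sigma> where s: "\<sigma> \<noteq> 0" "bd i v = \<sigma> *\<^sub>R w" and w: "w \<in> Lp i" using assms M_mem by auto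
  show ?thesis unfolding coef_def using s rep_sb[OF indepI Lp_in_I[OF w]] by simp
qed

lemma M_sub: "M \<subseteq> cgraph bd I"
proof
  fix e assume "e \<in> M"
  then obtain i v w where e: "e = ((i,v),(i-1,w))" "v \<in> Rp i" "w \<in> Lp i" using M_form by blast
  then have "coef bd I i v w \<noteq> 0" using coef_M \<open>e \<in> M\<close> by simp
  then show "e \<in> cgraph bd I" unfolding cgraph_def using e Rp_in_I Lp_in_I by blast
qed

lemma cg_sub: "cgraph bd I \<subseteq> M"
proof
  fix e assume "e \<in> cgraph bd I"
  then obtain n a b where e: "e = ((n,a),(n-1,b))" "a \<in> I n" "b \<in> I (n-1)" "coef bd I n a b \<noteq> 0"
    unfolding cgraph_def by blast
  have c: "representation (I (n-1)) (bd n a) b \<noteq> 0" using e(4) unfolding coef_def .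
  have "a \<in> Lp (n+1) \<or> a \<in> Rp n \<or> a \<in> K n" using e(2) unfolding hodge_basis_def by auto
  moreover have "a \<notin> Lp (n+1)" using Lp_bd0 c by (metis representation_zero)
  moreover have "a \<notin> K n" using ker_facts(1) K_sub c by (metis representation_zero subsetD)
  ultimately have aR: "a \<in> Rp n" by blast
  obtain s w where sw: "s \<noteq> 0" "w \<in> Lp n" "bd n a = s *\<^sub>R w" using Rp_bd[OF aR] by blast
  have "b = w" using c sw rep_sb[OF indepI Lp_in_I[OF sw(2)]] by (auto split: if_splits)
  then show "e \<in> M" using e(1) aR sw M_mem by blast
qed

lemma rg: "reversed_graph bd I M = M\<inverse>"
  using M_sub cg_sub unfolding reversed_graph_def by auto

lemma on_uniq: assumes "orthonormal_basis_of B S" "w1 \<in> B" "w2 \<in> B" "s1 \<noteq> 0" "s1 *\<^sub>R w1 = s2 *\<^sub>R w2"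
  shows "w1 = w2"
proof (rule ccontr)
  assume ne: "w1 \<noteq> w2"
  have "inner (s1 *\<^sub>R w1) w1 = inner (s2 *\<^sub>R w2) w1" using assms(5) by simp
  then have "s1 * (norm w1)^2 = s2 * inner w2 w1" by (simp add: dot_square_norm)
  then show False using assms ne unfolding orthonormal_basis_of_def by auto
qed

lemma Rp_Lp_disj: "v \<in> Rp n \<Longrightarrow> v \<notin> Lp (n + 1)"
  using orth_LR Rp_facts(2) by fastforce

lemma p_match: assumes "((i,v),(j,w)) \<in> M"
  obtains p where "bij_betw p (Rp i) (Lp i)" "p v = w"
proof -
  obtain p where p: "bij_betw p (Rp i) (Lp i)"
    and pp: "\<forall>v\<in>Rp i. \<exists>lam. lam \<noteq> 0 \<and> adj (C i) (bd i) (bd i v) = lam *\<^sub>R v \<and> bd i v = sqrt lam *\<^sub>R p v"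
    using svd unfolding svd_bases_def by blast
  obtain \<sigma> where s: "\<sigma> \<noteq> 0" "bd i v = \<sigma> *\<^sub>R w" and w: "w \<in> Lp i" and v: "v \<in> Rp i" using assms M_mem by auto
  obtain lam where l: "lam \<noteq> 0" "bd i v = sqrt lam *\<^sub>R p v" using pp v by blast
  have "p v \<in> Lp i" using p v unfolding bij_betw_def by auto
  then have "p v = w" using on_uniq[OF onbL[of i], of "p v" w "sqrt lam" \<sigma>] l s w unfolding Lplus_def by auto
  then show ?thesis using that p by blast
qed

lemma M_disj: assumes "e1 \<in> M" "e2 \<in> M" "e1 \<noteq> e2" shows "{fst e1, snd e1} \<inter> {fst e2, snd e2} = {}"
proof -
  obtain i v1 w1 where e1: "e1 = ((i,v1),(i-1,w1))" "v1 \<in> Rp i" "w1 \<in> Lp i" using M_form assms(1) by blast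
  obtain j v2 w2 where e2: "e2 = ((j,v2),(j-1,w2))" "v2 \<in> Rp j" "w2 \<in> Lp j" using M_form assms(2) by blast
  have "\<exists>\<sigma>. \<sigma> \<noteq> 0 \<and> bd i v1 = \<sigma> *\<^sub>R w1" using assms(1) e1(1) by (simp add: M_mem)
  then obtain s1 where s1: "s1 \<noteq> 0" "bd i v1 = s1 *\<^sub>R w1" by blast
  have "\<exists>\<sigma>. \<sigma> \<noteq> 0 \<and> bd j v2 = \<sigma> *\<^sub>R w2" using assms(2) e2(1) by (simp add: M_mem)
  then obtain s2 where s2: "s2 \<noteq> 0" "bd j v2 = s2 *\<^sub>R w2" by blast
  have w1L: "w1 \<in> L i" using e1(3) unfolding Lplus_def by simp
  have w2L: "w2 \<in> L j" using e2(3) unfolding Lplus_def by simp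
  have A: "(i,v1) \<noteq> (j,v2)"
  proof
    assume "(i,v1) = (j,v2)"
    then have ij: "i = j" "v1 = v2" by simp_all
    have eq: "s1 *\<^sub>R w1 = s2 *\<^sub>R w2" using s1(2) s2(2) ij by simp
    have w2L': "w2 \<in> L i" using w2L ij by simp
    have "w1 = w2" by (rule on_uniq[OF onbL[of i] w1L w2L' s1(1) eq])
    then show False using assms(3) e1(1) e2(1) ij by simp
  qed
  have B: "(i-1,w1) \<noteq> (j-1,w2)"
  proof
    assume "(i-1,w1) = (j-1,w2)"
    then have ij: "i = j" "w1 = w2" by simp_all
    obtain p0 where p0: "bij_betw p0 (Rp i) (Lp i)"
      and pp: "\<forall>v\<in>Rp i. \<exists>lam. lam \<noteq> 0 \<and> adj (C i) (bd i) (bd i v) = lam *\<^sub>R v \<and> bd i v = sqrt lam *\<^sub>R p0 v"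
      using svd unfolding svd_bases_def by blast
    have key: "p0 v = w1" if vR: "v \<in> Rp i" and sn: "s \<noteq> 0" and bv: "bd i v = s *\<^sub>R w1" for v s
    proof -
      have "\<exists>lam. lam \<noteq> 0 \<and> adj (C i) (bd i) (bd i v) = lam *\<^sub>R v \<and> bd i v = sqrt lam *\<^sub>R p0 v"
        using pp vR by (rule bspec)
      then obtain lam where l0: "lam \<noteq> 0" and l2: "bd i v = sqrt lam *\<^sub>R p0 v" by blast
      have "p0 v \<in> Lp i" using bij_betwE[OF p0] vR by blast
      then have pL: "p0 v \<in> L i" unfolding Lplus_def by simp
      have eq: "sqrt lam *\<^sub>R p0 v = s *\<^sub>R w1" using l2 bv by metis
      have sq: "sqrt lam \<noteq> 0" using l0 by simp
      show ?thesis by (rule on_uniq[OF onbL[of i] pL w1L sq eq])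
    qed
    have k1: "p0 v1 = w1" using key[OF e1(2) s1] .
    have v2R: "v2 \<in> Rp i" using e2(2) ij by simp
    have bv2: "bd i v2 = s2 *\<^sub>R w1" using s2(2) ij by simp
    have k2: "p0 v2 = w1" by (rule key[OF v2R s2(1) bv2])
    have inj: "inj_on p0 (Rp i)" using p0 by (simp add: bij_betw_def)
    have "v1 = v2" using inj_onD[OF inj _ e1(2) v2R] k1 k2 by simp
    then show False using assms(3) e1(1) e2(1) ij by simp
  qed
  have C1: "(i,v1) \<noteq> (j-1,w2)"
  proof
    assume "(i,v1) = (j-1,w2)"
    then have "j = i + 1" "v1 = w2" by simp_all
    then have "v1 \<in> Lp (i+1)" using e2(3) by simp
    then show False using Rp_Lp_disj[OF e1(2)] by simp
  qed
  have C2: "(i-1,w1) \<noteq> (j,v2)"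
  proof
    assume "(i-1,w1) = (j,v2)"
    then have "i = j + 1" "v2 = w1" by simp_all
    then have "v2 \<in> Lp (j+1)" using e1(3) by simp
    then show False using Rp_Lp_disj[OF e2(2)] by simp
  qed
  show ?thesis unfolding e1(1) e2(1) fst_conv snd_conv using A B C1 C2 by blast
qed

lemma up: "(x,y) \<in> (M\<inverse>)\<^sup>* \<Longrightarrow> fst x \<le> fst y \<and> (fst x = fst y \<longrightarrow> x = y)"
proof (induction rule: rtrancl_induct)
  case base
  then show ?case by simp
next
  case (step y z)
  then have "(z,y) \<in> M" by simp
  then have "fst y = fst z - 1" using M_form by fastforce
  then show ?case using step by auto
qed

lemma path_rt: assumes "is_path E p u v" shows "(u,v) \<in> E\<^sup>*"
proof -
  have ne: "p \<noteq> []" and h: "hd p = u" and l: "last p = v"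
    and st: "\<forall>i. Suc i < length p \<longrightarrow> (p ! i, p ! Suc i) \<in> E" using assms unfolding is_path_def by auto
  have "i < length p \<longrightarrow> (u, p ! i) \<in> E\<^sup>*" for i
  proof (induction i)
    case 0
    then show ?case using ne h by (simp add: hd_conv_nth)
  next
    case (Suc i)
    then show ?case using st by (meson Suc_lessD rtrancl.rtrancl_into_rtrancl)
  qed
  then have "(u, p ! (length p - 1)) \<in> E\<^sup>*" using ne by simp
  then show ?thesis using ne l by (simp add: last_conv_nth)
qed

lemma crit: "critical I M n = K n"
proof
  show "critical I M n \<subseteq> K n"
  proof
    fix a assume a: "a \<in> critical I M n"
    then have cj: "a \<in> I n \<and> (\<forall>e\<in>M. fst e \<noteq> (n, a) \<and> snd e \<noteq> (n, a))" unfolding critical_def mem_Collect_eq .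
    have aI: "a \<in> I n" using cj by (rule conjunct1)
    have nm: "\<forall>e\<in>M. fst e \<noteq> (n, a) \<and> snd e \<noteq> (n, a)" using cj by (rule conjunct2)
    have "a \<notin> Rp n"
    proof
      assume aR: "a \<in> Rp n"
      obtain s w where sw: "s \<noteq> 0" "w \<in> Lp n" "bd n a = s *\<^sub>R w" using Rp_bd[OF aR] by blast
      then have "((n,a),(n-1,w)) \<in> M" using aR M_mem by blast
      then show False using nm by (metis fst_conv)
    qed
    moreover have "a \<notin> Lp (n+1)"
    proof
      assume aL: "a \<in> Lp (n+1)"
      obtain p where p: "bij_betw p (Rp (n+1)) (Lp (n+1))"
        and pp: "\<forall>v\<in>Rp (n+1). \<exists>lam. lam \<noteq> 0 \<and> adj (C (n+1)) (bd (n+1)) (bd (n+1) v) = lam *\<^sub>R v \<and> bd (n+1) v = sqrt lam *\<^sub>R p v"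
        using svd unfolding svd_bases_def by blast
      obtain v where v: "v \<in> Rp (n+1)" "p v = a" using p aL unfolding bij_betw_def by (metis imageE)
      obtain lam where l: "lam \<noteq> 0" "bd (n+1) v = sqrt lam *\<^sub>R a" using pp v by blast
      have "sqrt lam \<noteq> 0" using l by simp
      then have "((n+1,v),(n+1-1,a)) \<in> M" unfolding M_mem using v l aL by blast
      then have "((n+1,v),(n,a)) \<in> M" by simp
      then show False using nm by (metis snd_conv)
    qed
    ultimately show "a \<in> K n" using aI unfolding hodge_basis_def by auto
  qed
next
  show "K n \<subseteq> critical I M n"
  proof
    fix a assume aK: "a \<in> K n"
    have a0: "a \<noteq> 0" using K_ind[of n] aK dependent_zero[of "K n"] by auto
    have akl: "a \<in> lap_kernel C bd n" using K_sub aK by auto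
    have nR: "a \<notin> Rp m" if "m = n" for m
    proof
      assume "a \<in> Rp m"
      then have "inner a a = 0" using orth_KR[OF akl] that by simp
      then show False using a0 by simp
    qed
    have nL: "a \<notin> Lp m" if "m - 1 = n" for m
    proof
      assume "a \<in> Lp m"
      moreover have "m = n + 1" using that by simp
      ultimately have "inner a a = 0" using orth_KL[OF akl] by simp
      then show False using a0 by simp
    qed
    have nmm: "\<forall>e\<in>M. fst e \<noteq> (n, a) \<and> snd e \<noteq> (n, a)"
    proof
      fix e assume "e \<in> M"
      then obtain i v w where e: "e = ((i,v),(i-1,w))" "v \<in> Rp i" "w \<in> Lp i" using M_form by blast
      show "fst e \<noteq> (n, a) \<and> snd e \<noteq> (n, a)"
      proof
        show "fst e \<noteq> (n, a)"
        proof
          assume "fst e = (n, a)"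
          then have "i = n" "v = a" using e(1) by simp_all
          then show False using nR[of i] e(2) by simp
        qed
        show "snd e \<noteq> (n, a)"
        proof
          assume "snd e = (n, a)"
          then have "i - 1 = n" "w = a" using e(1) by simp_all
          then show False using nL[of i] e(3) by simp
        qed
      qed
    qed
    have aI: "a \<in> I n" using aK unfolding hodge_basis_def by simp
    show "a \<in> critical I M n" unfolding critical_def mem_Collect_eq using aI nmm by (rule conjI)
  qed
qed

end

theorem mainTheorem3:
  fixes C :: "int \<Rightarrow> 'v::real_inner set"
    and bd :: "int \<Rightarrow> 'v \<Rightarrow> 'v"
    and R L K :: "int \<Rightarrow> 'v set"
  assumes "chain_complex C bd"
    and "\<forall>n. svd_bases (C n) (C (n - 1)) (bd n) (R n) (L n)"
    and "\<forall>n. is_basis_of (K n) (lap_kernel C bd n)"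
  shows "morse_matching bd (hodge_basis C bd R L K) (hodge_matching C bd R L)
    \<and> (\<forall>n. span (critical (hodge_basis C bd R L K) (hodge_matching C bd R L) n) = lap_kernel C bd n)
    \<and> (\<forall>n. \<forall>x\<in>span (critical (hodge_basis C bd R L K) (hodge_matching C bd R L) n).
          morse_boundary bd (hodge_basis C bd R L K) (hodge_matching C bd R L) n x = 0)"
proof -
  interpret hs C bd R L K using assms by unfold_locales
  have mm: "morse_matching bd I M"
    unfolding morse_matching_def rg
  proof (intro conjI allI impI ballI)
    show "M \<subseteq> cgraph bd I" by (rule M_sub)
  next
    fix e1 e2 assume "e1 \<in> M" "e2 \<in> M" "e1 \<noteq> e2"
    then show "{fst e1, snd e1} \<inter> {fst e2, snd e2} = {}" by (rule M_disj)
  next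
    fix n a b assume "((n, a), n - 1, b) \<in> M"
    then show "coef bd I n a b \<noteq> 0" by (rule coef_M)
  next
    fix n a b assume "((n, a), n, b) \<in> (M\<inverse>)\<^sup>*"
    then have "fst (n,a) \<le> fst (n,b) \<and> (fst (n,a) = fst (n,b) \<longrightarrow> (n,a) = (n,b))" by (rule up)
    then show "a = b" by simp
  qed
  have G0: "Gamma bd I M n a b = 0" for n a b
  proof -
    have "{p. is_path (reversed_graph bd I M) p (n, a) (n - 1, b)} = {}"
    proof -
      have "\<not> is_path (M\<inverse>) p (n, a) (n - 1, b)" for p
      proof
        assume "is_path (M\<inverse>) p (n, a) (n - 1, b)"
        then have "((n, a), (n - 1, b)) \<in> (M\<inverse>)\<^sup>*" by (rule path_rt)
        then have "fst (n,a) \<le> fst (n-1,b)" using up by blast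
        then have "n \<le> n - 1" by simp
        then show False by simp
      qed
      then show ?thesis unfolding rg by auto
    qed
    then show ?thesis unfolding Gamma_def by simp
  qed
  have c2: "\<forall>n. span (critical I M n) = lap_kernel C bd n" using crit K_span by simp
  have c3: "\<forall>n. \<forall>x\<in>span (critical I M n). morse_boundary bd I M n x = 0"
    unfolding morse_boundary_def G0 by simp
  show ?thesis using mm c2 c3 by blast
qed

end
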